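(* Consider $\dot x=f(x)+Bu+Cw$ with $x\in\mathbb{R}^n$, $u\in\mathbb{R}^p$, $w\in\mathbb{R}^r$, $f$ continuously differentiable, $B\in\mathbb{R}^{n\times p}$, $C\in\mathbb{R}^{n\times r}$, and suppose there are matrices $A_1,\dots,A_k\in\mathbb{R}^{n\times n}$ with $D_xf(x)\in\mathrm{conv}\{A_1,\dots,A_k\}$ for all $x\in\mathbb{R}^n$. Let $H\in\mathbb{R}^{m\times n}$ have full column rank, $\underline h\le\overline h\in\mathbb{R}^m$, $\mathcal P=\{x:\underline h\le Hx\le\overline h\}$, let $K=\{x:Hx\ge0_m\}$ with generating matrix $V\in\mathbb{R}^{n\times q}$ (i.e. $K=\{Vy:y\ge0_q\}$), and let $\underline\eta,\overline\eta\in\mathbb{R}^n$ satisfy $H\underline\eta=\underline h$, $H\overline\eta=\overline h$. Let $\underline w\le\overline w\in\mathbb{R}^r$. Suppose $(F^*,\alpha^* )\in\mathbb{R}^{p\times n}\times\mathbb{R}$ satisfies $H(A_i+BF^*+\alpha^*I_n)V\ge0_{m\times q}$ for all $i=1,\dots,k$, $H(f(\overline\eta)+BF^*\overline\eta)+(HC)^+\overline w+(HC)^-\underline w\le0_m$, $H(f(\underline\eta)+BF^*\underline\eta)+(HC)^+\underline w+(HC)^-\overline w\ge0_m$. Then $\mathcal P$ is forward invariant for the closed-loop system $\dot x=f(x)+BF^*x+Cw(t)$ for every disturbance signal $t\mapsto w(t)$ with $w(t)\in[\underline w,\overline w]$ for all $t\ge0$.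
   Context: For a matrix $M$, $M^+$ and $M^-$ denote its entrywise positive and negative parts: $(M^+)_{ij}=\max(M_{ij},0)$, $(M^-)_{ij}=\min(M_{ij},0)$. Vector/matrix inequalities are entrywise; $[\underline w,\overline w]=\{w:\underline w\le w\le\overline w\}$. $\mathrm{conv}$ denotes convex hull. A set $\mathcal P$ is forward invariant if every trajectory starting in $\mathcal P$ remains in $\mathcal P$ for all $t\ge0$. *)

theory Defs
  imports "HOL-Analysis.Analysis"
begin

definition mat_pos :: "real^'c^'r \<Rightarrow> real^'c^'r" where
  "mat_pos M = (\<chi> i j. max (M $ i $ j) 0)"

definition mat_neg :: "real^'c^'r \<Rightarrow> real^'c^'r" where
  "mat_neg M = (\<chi> i j. min (M $ i $ j) 0)"

definition forward_invariant :: "(real \<Rightarrow> real^'n \<Rightarrow> real^'n) \<Rightarrow> (real^'n) set \<Rightarrow> bool" where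
  "forward_invariant g P \<longleftrightarrow>
     (\<forall>x::real \<Rightarrow> real^'n.
        (\<forall>t\<ge>0. (x has_vector_derivative g t (x t)) (at t within {0..})) \<and> x 0 \<in> P
        \<longrightarrow> (\<forall>t\<ge>0. x t \<in> P))"

end

theory Submission
  imports Defs
begin

lemma HCw_upper:
  fixes M :: "real^'r^'m"
  assumes "wl \<le> w" "w \<le> wu"
  shows "M *v w \<le> mat_pos M *v wu + mat_neg M *v wl"
  unfolding less_eq_vec_def
proof
  fix a
  have "(M *v w) $ a = (\<Sum>j\<in>UNIV. M$a$j * w$j)" by (simp add: matrix_vector_mult_def)
  also have "\<dots> \<le> (\<Sum>j\<in>UNIV. max (M$a$j) 0 * wu$j + min (M$a$j) 0 * wl$j)"
  proof (rule sum_mono)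
    fix j
    have "wl$j \<le> w$j" "w$j \<le> wu$j" using assms by (auto simp: less_eq_vec_def)
    then show "M$a$j * w$j \<le> max (M$a$j) 0 * wu$j + min (M$a$j) 0 * wl$j"
      by (cases "M$a$j \<ge> 0") (auto simp: mult_left_mono mult_left_mono_neg)
  qed
  also have "\<dots> = (mat_pos M *v wu + mat_neg M *v wl) $ a"
    by (simp add: matrix_vector_mult_def mat_pos_def mat_neg_def sum.distrib)
  finally show "(M *v w) $ a \<le> (mat_pos M *v wu + mat_neg M *v wl) $ a" .
qed

lemma HCw_lower:
  fixes M :: "real^'r^'m"
  assumes "wl \<le> w" "w \<le> wu"
  shows "mat_pos M *v wl + mat_neg M *v wu \<le> M *v w"
  unfolding less_eq_vec_def
proof
  fix a
  have "(mat_pos M *v wl + mat_neg M *v wu) $ a = (\<Sum>j\<in>UNIV. max (M$a$j) 0 * wl$j + min (M$a$j) 0 * wu$j)"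
    by (simp add: matrix_vector_mult_def mat_pos_def mat_neg_def sum.distrib)
  also have "\<dots> \<le> (\<Sum>j\<in>UNIV. M$a$j * w$j)"
  proof (rule sum_mono)
    fix j
    have "wl$j \<le> w$j" "w$j \<le> wu$j" using assms by (auto simp: less_eq_vec_def)
    then show "max (M$a$j) 0 * wl$j + min (M$a$j) 0 * wu$j \<le> M$a$j * w$j"
      by (cases "M$a$j \<ge> 0") (auto simp: mult_left_mono mult_left_mono_neg)
  qed
  also have "\<dots> = (M *v w) $ a" by (simp add: matrix_vector_mult_def)
  finally show "(mat_pos M *v wl + mat_neg M *v wu) $ a \<le> (M *v w) $ a" .
qed

lemma pos_conv:
  fixes H :: "real^'n^'m" and V :: "real^'q^'n" and Q :: "real^'n^'n"
  assumes cond: "\<And>i a b. i \<in> S \<Longrightarrow> (H ** (A i + Q) ** V) $ a $ b \<ge> 0"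
    and M: "M \<in> convex hull (A ` S)" and y: "y \<ge> 0"
  shows "(H *v ((M + Q) *v (V *v y))) $ a \<ge> 0"
proof -
  define T where "T = {M :: real^'n^'n. \<forall>a. (H *v ((M + Q) *v (V *v y))) $ a \<ge> 0}"
  have lin: "H *v ((M + Q) *v z) = H *v (M *v z) + H *v (Q *v z)" for M z
    by (simp add: matrix_vector_mult_add_rdistrib matrix_vector_right_distrib)
  have "A ` S \<subseteq> T"
  proof
    fix N assume "N \<in> A ` S"
    then obtain i where i: "i \<in> S" "N = A i" by auto
    show "N \<in> T" unfolding T_def mem_Collect_eq
    proof
      fix a
      have "H *v ((N + Q) *v (V *v y)) = (H ** (N + Q) ** V) *v y"
        by (simp add: matrix_vector_mul_assoc matrix_mul_assoc)
      moreover have "((H ** (N + Q) ** V) *v y) $ a \<ge> 0"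
        using cond[OF i(1)] y i(2)
        by (auto simp: matrix_vector_mult_def less_eq_vec_def intro!: sum_nonneg)
      ultimately show "(H *v ((N + Q) *v (V *v y))) $ a \<ge> 0" by simp
    qed
  qed
  moreover have "convex T"
  proof (rule convexI)
    fix M1 M2 :: "real^'n^'n" and u v :: real
    assume m1: "M1 \<in> T" and m2: "M2 \<in> T"
      and uv: "0 \<le> u" "0 \<le> v" "u + v = 1"
    have e: "H *v ((u *\<^sub>R M1 + v *\<^sub>R M2 + Q) *v z)
       = u *\<^sub>R (H *v ((M1 + Q) *v z)) + v *\<^sub>R (H *v ((M2 + Q) *v z))" for z
    proof -
      have "u *\<^sub>R M1 + v *\<^sub>R M2 + Q = u *\<^sub>R (M1 + Q) + v *\<^sub>R (M2 + Q)"
        using uv(3) by (simp add: algebra_simps flip: scaleR_add_left)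
      then show ?thesis
        by (simp add: matrix_vector_mult_add_rdistrib matrix_vector_right_distrib
            matrix_vector_mult_scaleR scaleR_add_right uv(3) flip: scaleR_matrix_vector_assoc scaleR_add_left)
    qed
    show "u *\<^sub>R M1 + v *\<^sub>R M2 \<in> T"
      unfolding T_def mem_Collect_eq e using m1 m2 uv by (simp add: T_def)
  qed
  ultimately have "convex hull (A ` S) \<subseteq> T" by (rule hull_minimal)
  then show ?thesis using M T_def by auto
qed

lemma mono_G:
  fixes f :: "real^'n \<Rightarrow> real^'n" and J :: "real^'n \<Rightarrow> real^'n^'n"
    and H :: "real^'n^'m" and V :: "real^'q^'n" and Q :: "real^'n^'n"
  assumes f_deriv: "\<And>x. (f has_derivative (\<lambda>v. J x *v v)) (at x)"
    and Jpos: "\<And>x y a. y \<ge> 0 \<Longrightarrow> (H *v ((J x + Q) *v (V *v y))) $ a \<ge> 0"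
    and V_gen: "{x. H *v x \<ge> 0} = {V *v y | y. y \<ge> 0}"
    and d: "H *v (y - x) \<ge> 0"
  shows "(H *v ((f y + Q *v y) - (f x + Q *v x))) $ a \<ge> 0"
proof -
  define d where "d = y - x"
  obtain z where z: "z \<ge> 0" "d = V *v z" using d V_gen unfolding d_def by blast
  define \<psi> where "\<psi> s = (H *v (f (x + s *\<^sub>R d) + Q *v (x + s *\<^sub>R d))) $ a" for s
  have der: "(\<psi> has_real_derivative (H *v ((J (x + s *\<^sub>R d) + Q) *v d)) $ a) (at s)" for s
  proof -
    have "((\<lambda>s. f (x + s *\<^sub>R d)) has_derivative (\<lambda>h. J (x + s *\<^sub>R d) *v (h *\<^sub>R d))) (at s)"
      by (rule has_derivative_compose[OF _ f_deriv, where f="\<lambda>s. x + s *\<^sub>R d", simplified])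
         (auto intro!: derivative_eq_intros)
    then have "((\<lambda>s. f (x + s *\<^sub>R d) + Q *v (x + s *\<^sub>R d)) has_derivative
        (\<lambda>h. J (x + s *\<^sub>R d) *v (h *\<^sub>R d) + Q *v (h *\<^sub>R d))) (at s)"
      by (auto intro!: derivative_eq_intros bounded_linear.has_derivative[OF matrix_vector_mul_bounded_linear])
    then have "(\<psi> has_derivative
        (\<lambda>h. (H *v (J (x + s *\<^sub>R d) *v (h *\<^sub>R d) + Q *v (h *\<^sub>R d))) $ a)) (at s)"
      unfolding \<psi>_def
      by (auto intro!: derivative_eq_intros bounded_linear.has_derivative[OF bounded_linear_vec_nth]
            bounded_linear.has_derivative[OF matrix_vector_mul_bounded_linear])
    then show ?thesis
      unfolding has_field_derivative_def
      by (simp add: matrix_vector_mult_scaleR matrix_vector_mult_add_rdistrib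
          matrix_vector_right_distrib mult_commute_abs flip: distrib_left)
  qed
  have "\<psi> 0 \<le> \<psi> 1"
  proof (rule DERIV_nonneg_imp_increasing_open[of 0 1 \<psi>])
    show "continuous_on {0..1} \<psi>"
      using der by (meson DERIV_isCont continuous_at_imp_continuous_on)
    show "\<exists>y. (\<psi> has_real_derivative y) (at t) \<and> 0 \<le> y" for t
      using der[of t] Jpos[OF z(1)] z(2) by blast
  qed simp
  then show ?thesis unfolding \<psi>_def d_def
    by (simp add: matrix_vector_right_distrib matrix_vector_mult_diff_distrib)
qed

lemma lip_G:
  fixes f :: "real^'n \<Rightarrow> real^'n" and J :: "real^'n \<Rightarrow> real^'n^'n"
    and Q :: "real^'n^'n" and S :: "(real^'n^'n) set"
  assumes f_deriv: "\<And>x. (f has_derivative (\<lambda>v. J x *v v)) (at x)"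
    and J_in: "\<And>x. J x \<in> S" and bS: "bounded S"
  shows "\<exists>L\<ge>0. \<forall>x y. norm ((f x + Q *v x) - (f y + Q *v y)) \<le> L * norm (x - y)"
proof -
  obtain b where b: "b > 0" "\<And>M. M \<in> S \<Longrightarrow> norm M \<le> b" using bS bounded_pos by blast
  have comp: "\<bar>J x $ i $ j\<bar> \<le> b" for x i j
  proof -
    have "\<bar>J x $ i $ j\<bar> \<le> norm (J x $ i)" by (rule component_le_norm_cart)
    also have "\<dots> \<le> norm (J x)" by (rule Finite_Cartesian_Product.norm_nth_le)
    also have "\<dots> \<le> b" using b(2)[OF J_in[of x]] .
    finally show ?thesis .
  qed
  define Lf where "Lf = real (CARD('n)) * real (CARD('n)) * b"
  have on: "onorm (\<lambda>v. J x *v v) \<le> Lf" for x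
    unfolding Lf_def using onorm_le_matrix_component[of "J x" b] comp by simp
  have lf: "norm (f x - f y) \<le> Lf * norm (x - y)" for x y
    by (rule differentiable_bound[where S=UNIV and f'="\<lambda>x v. J x *v v"])
       (use f_deriv on in auto)
  define LQ where "LQ = onorm ((*v) Q)"
  have lq: "norm (Q *v x - Q *v y) \<le> LQ * norm (x - y)" for x y
    unfolding LQ_def using onorm[OF matrix_vector_mul_bounded_linear[of Q], of "x - y"]
    by (simp add: matrix_vector_mult_diff_distrib)
  have "Lf \<ge> 0" unfolding Lf_def using b by simp
  moreover have "LQ \<ge> 0" unfolding LQ_def by (rule onorm_pos_le[OF matrix_vector_mul_bounded_linear])
  moreover have "norm ((f x + Q *v x) - (f y + Q *v y)) \<le> (Lf + LQ) * norm (x - y)" for x y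
  proof -
    have "norm ((f x + Q *v x) - (f y + Q *v y)) \<le> norm (f x - f y) + norm (Q *v x - Q *v y)"
      by (metis (no_types, lifting) add_diff_add norm_triangle_ineq)
    then show ?thesis using lf[of x y] lq[of x y] by (simp add: distrib_right)
  qed
  ultimately show ?thesis by (intro exI[of _ "Lf + LQ"]) auto
qed

lemma gronwall_dini:
  fixes D :: "real \<Rightarrow> real"
  assumes cont: "continuous_on {0..} D" and D0: "D 0 \<le> 0" and L: "L \<ge> 0"
    and step: "\<And>t e. t \<ge> 0 \<Longrightarrow> e > 0 \<Longrightarrow>
       \<exists>\<delta>>0. \<forall>h. 0 < h \<and> h < \<delta> \<longrightarrow> D (t+h) \<le> (1 + h*L) * D t + e*h"
    and T: "T \<ge> 0"
  shows "D T \<le> 0"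
proof -
  have main: "D T \<le> \<eta> * exp ((L+1)*T)" if \<eta>: "\<eta> > 0" for \<eta>
  proof -
    define \<phi> where "\<phi> t = \<eta> * exp ((L+1)*t)" for t
    have \<phi>pos: "\<phi> t > 0" for t unfolding \<phi>_def using \<eta> by simp
    define S where "S = {s. 0 \<le> s \<and> s \<le> T \<and> (\<forall>\<tau>. 0 \<le> \<tau> \<and> \<tau> \<le> s \<longrightarrow> D \<tau> \<le> \<phi> \<tau>)}"
    have "0 \<in> S" unfolding S_def using D0 \<phi>pos[of 0] T by force
    have bdd: "bdd_above S" unfolding S_def by (auto intro: bdd_aboveI[of _ T])
    define s0 where "s0 = Sup S"
    have s0ge: "0 \<le> s0" unfolding s0_def using cSup_upper[OF \<open>0 \<in> S\<close> bdd] .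
    have s0le: "s0 \<le> T" unfolding s0_def
      by (rule cSup_least) (use \<open>0 \<in> S\<close> S_def in auto)
    have A: "D \<tau> \<le> \<phi> \<tau>" if "0 \<le> \<tau>" "\<tau> < s0" for \<tau>
    proof -
      obtain s where "s \<in> S" "\<tau> < s" using less_cSupE[of \<tau> S] \<open>\<tau> < s0\<close> \<open>0 \<in> S\<close> s0_def by blast
      then show ?thesis using that S_def by auto
    qed
    have B: "D s0 \<le> \<phi> s0"
    proof (cases "s0 = 0")
      case True then show ?thesis using D0 \<phi>pos[of 0] by simp
    next
      case False
      then have pos: "0 < s0" using s0ge by simp
      have c: "continuous_on {0..s0} (\<lambda>\<tau>. D \<tau> - \<phi> \<tau>)"
        unfolding \<phi>_def
        by (intro continuous_intros continuous_on_subset[OF cont]) auto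
      have cl: "closed ({0..s0} \<inter> (\<lambda>\<tau>. D \<tau> - \<phi> \<tau>) -` {..0})"
        by (rule continuous_closed_preimage[OF c]) auto
      have "{0..<s0} \<subseteq> {0..s0} \<inter> (\<lambda>\<tau>. D \<tau> - \<phi> \<tau>) -` {..0}" using A by auto
      then have "closure {0..<s0} \<subseteq> {0..s0} \<inter> (\<lambda>\<tau>. D \<tau> - \<phi> \<tau>) -` {..0}"
        using closure_minimal cl by blast
      moreover have "s0 \<in> closure {0..<s0}" using pos by simp
      ultimately have "s0 \<in> (\<lambda>\<tau>. D \<tau> - \<phi> \<tau>) -` {..0}" by blast
      then show ?thesis by simp
    qed
    have s0S: "s0 \<in> S" unfolding S_def
    proof (intro CollectI conjI allI impI)
      fix \<tau> assume "0 \<le> \<tau> \<and> \<tau> \<le> s0"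
      then show "D \<tau> \<le> \<phi> \<tau>" using A B by (cases "\<tau> = s0") auto
    qed (use s0ge s0le in auto)
    have "s0 = T"
    proof (rule ccontr)
      assume "s0 \<noteq> T"
      then have lt: "s0 < T" using s0le by simp
      obtain \<delta> where \<delta>: "\<delta> > 0" "\<And>h. 0 < h \<Longrightarrow> h < \<delta> \<Longrightarrow> D (s0+h) \<le> (1 + h*L) * D s0 + (\<phi> s0 / 2)*h"
        using step[OF s0ge, of "\<phi> s0 / 2"] \<phi>pos[of s0] by auto
      define s1 where "s1 = min (s0 + \<delta>/2) T"
      have "s1 \<in> S"
        unfolding S_def
      proof (intro CollectI conjI allI impI)
        show "0 \<le> s1" "s1 \<le> T" using s1_def s0ge lt \<delta>(1) by auto
        fix \<tau> assume \<tau>: "0 \<le> \<tau> \<and> \<tau> \<le> s1"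
        show "D \<tau> \<le> \<phi> \<tau>"
        proof (cases "\<tau> \<le> s0")
          case True then show ?thesis using s0S \<tau> S_def by auto
        next
          case False
          define h where "h = \<tau> - s0"
          have h: "0 < h" "h < \<delta>" using False \<tau> s1_def \<delta>(1) h_def by auto
          have "D \<tau> = D (s0 + h)" by (simp add: h_def)
          also have "\<dots> \<le> (1 + h*L) * D s0 + (\<phi> s0 / 2)*h" using \<delta>(2)[OF h] .
          also have "\<dots> \<le> (1 + h*L) * \<phi> s0 + (\<phi> s0 / 2)*h"
            using B h L by (intro add_right_mono mult_left_mono) auto
          also have "\<dots> \<le> \<phi> s0 * (1 + (L+1)*h)"
            using \<phi>pos[of s0] h by (simp add: algebra_simps)
          also have "\<dots> \<le> \<phi> s0 * exp ((L+1)*h)"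
            using \<phi>pos[of s0] by (intro mult_left_mono) auto
          also have "\<dots> = \<phi> \<tau>"
            unfolding \<phi>_def h_def by (simp add: algebra_simps flip: exp_add)
          finally show ?thesis .
        qed
      qed
      then have "s1 \<le> s0" unfolding s0_def using cSup_upper bdd by blast
      moreover have "s1 > s0" using s1_def lt \<delta>(1) by auto
      ultimately show False by simp
    qed
    then show ?thesis using B \<phi>_def by simp
  qed
  show ?thesis
  proof (rule ccontr)
    assume "\<not> D T \<le> 0"
    then have pos: "D T > 0" by simp
    define \<eta> where "\<eta> = D T / (2 * exp ((L+1)*T))"
    have "\<eta> > 0" using pos unfolding \<eta>_def by simp
    from main[OF this] have "D T \<le> D T / 2" unfolding \<eta>_def by simp
    then show False using pos by simp
  qed
qed


theorem theorem5:
  fixes f :: "real^'n \<Rightarrow> real^'n"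
    and J :: "real^'n \<Rightarrow> real^'n^'n"
    and B :: "real^'p^'n" and C :: "real^'r^'n"
    and A :: "nat \<Rightarrow> real^'n^'n" and k :: nat
    and H :: "real^'n^'m" and hl hu :: "real^'m"
    and V :: "real^'q^'n"
    and etal etau :: "real^'n"
    and wl wu :: "real^'r"
    and F :: "real^'n^'p" and \<alpha> :: real
  assumes f_deriv: "\<And>x. (f has_derivative (\<lambda>v. J x *v v)) (at x)"
    and J_cont: "continuous_on UNIV J"
    and J_conv: "\<And>x. J x \<in> convex hull (A ` {1..k})"
    and H_rank: "rank H = CARD('n)"
    and h_le: "hl \<le> hu"
    and V_gen: "{x. H *v x \<ge> 0} = {V *v y | y. y \<ge> 0}"
    and eta_l: "H *v etal = hl" and eta_u: "H *v etau = hu"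
    and w_le: "wl \<le> wu"
    and cond1: "\<And>i a b. i \<in> {1..k} \<Longrightarrow>
                   (H ** (A i + B ** F + \<alpha> *\<^sub>R mat 1) ** V) $ a $ b \<ge> 0"
    and cond2: "H *v (f etau + B *v (F *v etau)) + mat_pos (H ** C) *v wu
                  + mat_neg (H ** C) *v wl \<le> 0"
    and cond3: "H *v (f etal + B *v (F *v etal)) + mat_pos (H ** C) *v wl
                  + mat_neg (H ** C) *v wu \<ge> 0"
  shows "\<forall>w :: real \<Rightarrow> real^'r. (\<forall>t\<ge>0. wl \<le> w t \<and> w t \<le> wu) \<longrightarrow>
           forward_invariant (\<lambda>t x. f x + B *v (F *v x) + C *v w t)
             {x. hl \<le> H *v x \<and> H *v x \<le> hu}"
proof (intro allI impI)
  fix w :: "real \<Rightarrow> real^'r"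
  assume wbox: "\<forall>t\<ge>0. wl \<le> w t \<and> w t \<le> wu"
  define Q where "Q = B ** F + \<alpha> *\<^sub>R mat 1"
  define G where "G z = f z + Q *v z" for z
  define g where "g z = f z + B *v (F *v z)" for z
  define P where "P = {x. hl \<le> H *v x \<and> H *v x \<le> hu}"
  have gG: "G z = g z + \<alpha> *\<^sub>R z" for z
    unfolding g_def G_def Q_def
    by (simp add: matrix_vector_mult_add_rdistrib matrix_vector_mul_assoc
        flip: scaleR_matrix_vector_assoc)
  have HG: "(H *v G z) $ a = (H *v g z) $ a + \<alpha> * (H *v z) $ a" for z a
    unfolding gG by (simp add: matrix_vector_right_distrib matrix_vector_mult_scaleR)
  have Jpos: "\<And>x y a. y \<ge> 0 \<Longrightarrow> (H *v ((J x + Q) *v (V *v y))) $ a \<ge> 0"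
    by (rule pos_conv[where A=A and S="{1..k}"]) (use cond1 J_conv in \<open>auto simp: Q_def add.assoc\<close>)
  have mono: "(H *v (G y' - G x')) $ a \<ge> 0" if "H *v (y' - x') \<ge> 0" for x' y' a
    using mono_G[OF f_deriv Jpos V_gen that] unfolding G_def by simp
  have monoc: "(H *v G x') $ a \<le> (H *v G y') $ a" if "H *v (y' - x') \<ge> 0" for x' y' a
    using mono[OF that, of a] by (simp add: matrix_vector_mult_diff_distrib)
  have Hg_le: "(H *v g p) $ a \<le> (H *v g etau) $ a + \<alpha> * (hu $ a - (H *v p) $ a)"
    if "p \<in> P" for p a
  proof -
    have "H *v (etau - p) \<ge> 0" using that eta_u unfolding P_def
      by (simp add: matrix_vector_mult_diff_distrib less_eq_vec_def)
    from monoc[OF this, of a] show ?thesis unfolding HG eta_u by (simp add: algebra_simps)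
  qed
  have Hg_ge: "(H *v g p) $ a \<ge> (H *v g etal) $ a - \<alpha> * ((H *v p) $ a - hl $ a)"
    if "p \<in> P" for p a
  proof -
    have "H *v (p - etal) \<ge> 0" using that eta_l unfolding P_def
      by (simp add: matrix_vector_mult_diff_distrib less_eq_vec_def)
    from monoc[OF this, of a] show ?thesis unfolding HG eta_l by (simp add: algebra_simps)
  qed
  have stepP: "p + h *\<^sub>R (g p + C *v wv) \<in> P"
    if p: "p \<in> P" and wv: "wl \<le> wv" "wv \<le> wu" and h: "0 \<le> h" "h * \<alpha> \<le> 1" for p wv h
  proof -
    have Hq: "H *v (p + h *\<^sub>R (g p + C *v wv)) = H *v p + h *\<^sub>R (H *v g p + (H ** C) *v wv)"
      by (simp add: matrix_vector_right_distrib matrix_vector_mult_scaleR matrix_vector_mul_assoc)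
    have up: "(H *v p) $ a + h * ((H *v g p) $ a + ((H ** C) *v wv) $ a) \<le> hu $ a" for a
    proof -
      define X where "X = (H *v g p) $ a"
      define W where "W = ((H ** C) *v wv) $ a"
      define E where "E = (H *v g etau) $ a"
      define U where "U = hu $ a"
      define Pa where "Pa = (H *v p) $ a"
      have "X \<le> E + \<alpha> * (U - Pa)" using Hg_le[OF p, of a] unfolding X_def E_def U_def Pa_def .
      moreover have "E + W \<le> 0"
      proof -
        have "W \<le> (mat_pos (H ** C) *v wu + mat_neg (H ** C) *v wl) $ a"
          using HCw_upper[OF wv, of "H ** C"] unfolding W_def less_eq_vec_def by blast
        moreover have "E + (mat_pos (H ** C) *v wu + mat_neg (H ** C) *v wl) $ a \<le> 0"
          using cond2 unfolding less_eq_vec_def E_def g_def by (simp add: add.assoc)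
        ultimately show ?thesis by linarith
      qed
      ultimately have xw: "X + W \<le> \<alpha> * (U - Pa)" by linarith
      have "Pa \<le> U" using p unfolding P_def less_eq_vec_def Pa_def U_def by blast
      have "h * (X + W) \<le> h * (\<alpha> * (U - Pa))" by (rule mult_left_mono[OF xw h(1)])
      moreover have "(1 - h * \<alpha>) * (U - Pa) \<ge> 0" using h \<open>Pa \<le> U\<close> by simp
      ultimately have "Pa + h * (X + W) \<le> U" by (simp add: algebra_simps)
      then show ?thesis unfolding X_def W_def U_def Pa_def .
    qed
    have lo: "hl $ a \<le> (H *v p) $ a + h * ((H *v g p) $ a + ((H ** C) *v wv) $ a)" for a
    proof -
      define X where "X = (H *v g p) $ a"
      define W where "W = ((H ** C) *v wv) $ a"
      define E where "E = (H *v g etal) $ a"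
      define U where "U = hl $ a"
      define Pa where "Pa = (H *v p) $ a"
      have "X \<ge> E - \<alpha> * (Pa - U)" using Hg_ge[OF p, of a] unfolding X_def E_def U_def Pa_def .
      moreover have "E + W \<ge> 0"
      proof -
        have "W \<ge> (mat_pos (H ** C) *v wl + mat_neg (H ** C) *v wu) $ a"
          using HCw_lower[OF wv, of "H ** C"] unfolding W_def less_eq_vec_def by blast
        moreover have "E + (mat_pos (H ** C) *v wl + mat_neg (H ** C) *v wu) $ a \<ge> 0"
          using cond3 unfolding less_eq_vec_def E_def g_def by (simp add: add.assoc)
        ultimately show ?thesis by linarith
      qed
      ultimately have xw: "X + W \<ge> - \<alpha> * (Pa - U)" by linarith
      have "U \<le> Pa" using p unfolding P_def less_eq_vec_def Pa_def U_def by blast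
      have "h * (X + W) \<ge> h * (- \<alpha> * (Pa - U))" by (rule mult_left_mono[OF xw h(1)])
      moreover have "(1 - h * \<alpha>) * (Pa - U) \<ge> 0" using h \<open>U \<le> Pa\<close> by simp
      ultimately have "U \<le> Pa + h * (X + W)" by (simp add: algebra_simps)
      then show ?thesis unfolding X_def W_def U_def Pa_def .
    qed
    show ?thesis unfolding P_def mem_Collect_eq Hq using up lo
      by (simp add: less_eq_vec_def)
  qed
  have Pclosed: "closed P"
  proof -
    have eq: "P = (\<lambda>x. H *v x) -` ({y. \<forall>i. hl$i \<le> y$i} \<inter> {y. \<forall>i. y$i \<le> hu$i})"
      unfolding P_def less_eq_vec_def by auto
    have cl: "closed ({y::real^'m. \<forall>i. hl$i \<le> y$i} \<inter> {y. \<forall>i. y$i \<le> hu$i})"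
      by (intro closed_Int closed_interval_left_cart closed_interval_right_cart)
    have co: "continuous (at x) (\<lambda>x. H *v x)" for x
      by (intro linear_continuous_at matrix_vector_mul_bounded_linear)
    show ?thesis unfolding eq by (rule continuous_closed_vimage[OF cl co])
  qed
  have Pne: "P \<noteq> {}" using h_le eta_u unfolding P_def by auto
  obtain LG where LG: "LG \<ge> 0" "\<forall>x y. norm (G x - G y) \<le> LG * norm (x - y)"
  proof -
    have "bounded (convex hull (A ` {1..k}))" by (intro bounded_convex_hull finite_imp_bounded) auto
    from lip_G[OF f_deriv J_conv this, of Q] show ?thesis using that unfolding G_def by blast
  qed
  define L where "L = LG + \<bar>\<alpha>\<bar>"
  have L0: "L \<ge> 0" using LG(1) unfolding L_def by simp
  have lipg: "norm (g y1 - g y2) \<le> L * norm (y1 - y2)" for y1 y2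
  proof -
    have "g y1 - g y2 = (G y1 - G y2) - \<alpha> *\<^sub>R (y1 - y2)" using gG[of y1] gG[of y2]
      by (simp add: algebra_simps)
    then have "norm (g y1 - g y2) \<le> norm (G y1 - G y2) + norm (\<alpha> *\<^sub>R (y1 - y2))"
      by (metis norm_triangle_ineq4)
    then show ?thesis using LG(2)[rule_format, of y1 y2] unfolding L_def by (simp add: distrib_right)
  qed
  show "forward_invariant (\<lambda>t x. f x + B *v (F *v x) + C *v w t) {x. hl \<le> H *v x \<and> H *v x \<le> hu}"
    unfolding forward_invariant_def P_def[symmetric]
  proof (intro allI impI)
    fix x :: "real \<Rightarrow> real^'n"
    assume asm: "(\<forall>t\<ge>0. (x has_vector_derivative f (x t) + B *v (F *v x t) + C *v w t) (at t within {0..})) \<and> x 0 \<in> P"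
    then have derx: "\<And>t. t \<ge> 0 \<Longrightarrow> (x has_vector_derivative g (x t) + C *v w t) (at t within {0..})"
      and x0: "x 0 \<in> P" unfolding g_def by auto
    define D where "D t = infdist (x t) P" for t
    have contx: "continuous_on {0..} x"
      using derx has_vector_derivative_continuous continuous_on_eq_continuous_within
      by (metis atLeast_iff)
    have contD: "continuous_on {0..} D" unfolding D_def by (intro continuous_on_infdist contx)
    have D0: "D 0 \<le> 0" using x0 by (simp add: D_def)
    have step: "\<exists>\<delta>>0. \<forall>h. 0 < h \<and> h < \<delta> \<longrightarrow> D (t+h) \<le> (1 + h*L) * D t + e*h"
      if t: "t \<ge> 0" and e: "e > 0" for t e
    proof -
      define v where "v = g (x t) + C *v w t"
      have "(x has_derivative (\<lambda>h. h *\<^sub>R v)) (at t within {0..})"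
        using derx[OF t] unfolding has_vector_derivative_def v_def .
      then obtain d where d: "d > 0"
        "\<forall>y\<in>{0..}. norm (y - t) < d \<longrightarrow> norm (x y - x t - (y - t) *\<^sub>R v) \<le> e * norm (y - t)"
        unfolding has_derivative_within_alt using e by blast
      define \<delta> where "\<delta> = min d (1 / (\<bar>\<alpha>\<bar> + 1))"
      have \<delta>pos: "\<delta> > 0" unfolding \<delta>_def using d(1) by simp
      show ?thesis
      proof (intro exI[of _ \<delta>] conjI allI impI \<delta>pos)
        fix h assume h: "0 < h \<and> h < \<delta>"
        have "h * (\<bar>\<alpha>\<bar> + 1) < 1"
          using h unfolding \<delta>_def by (simp add: less_divide_eq)
        moreover have "h * \<alpha> \<le> h * (\<bar>\<alpha>\<bar> + 1)" using h by (intro mult_left_mono) auto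
        ultimately have h\<alpha>: "h * \<alpha> \<le> 1" by linarith
        have xd: "norm (x (t+h) - x t - h *\<^sub>R v) \<le> e * h"
          using d(2)[rule_format, of "t+h"] h t unfolding \<delta>_def by auto
        have wt: "wl \<le> w t" "w t \<le> wu" using wbox t by auto
        have bound: "D (t+h) - e*h \<le> dist (x t) p * (1 + h*L)" if p: "p \<in> P" for p
        proof -
          have qP: "p + h *\<^sub>R (g p + C *v w t) \<in> P" by (rule stepP[OF p wt]) (use h h\<alpha> in auto)
          have "D (t+h) \<le> dist (x (t+h)) (p + h *\<^sub>R (g p + C *v w t))"
            unfolding D_def by (rule infdist_le[OF qP])
          also have "\<dots> = norm ((x (t+h) - x t - h *\<^sub>R v) + ((x t - p) + h *\<^sub>R (g (x t) - g p)))"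
            unfolding dist_norm v_def by (simp add: algebra_simps)
          also have "\<dots> \<le> norm (x (t+h) - x t - h *\<^sub>R v) + (norm (x t - p) + norm (h *\<^sub>R (g (x t) - g p)))"
            by (meson norm_triangle_ineq norm_triangle_le add_left_mono order_trans)
          also have "\<dots> \<le> e*h + (norm (x t - p) + h * (L * norm (x t - p)))"
            using xd lipg[of "x t" p] h by (intro add_mono order_refl) (auto intro: mult_left_mono)
          finally show ?thesis by (simp add: dist_norm algebra_simps)
        qed
        have hL: "1 + h*L > 0" using h L0 by (simp add: add_pos_nonneg)
        have "(D (t+h) - e*h) / (1 + h*L) \<le> infdist (x t) P"
          unfolding infdist_notempty[OF Pne]
          by (rule cINF_greatest[OF Pne]) (use bound hL in \<open>simp add: pos_divide_le_eq\<close>)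
        then have "D (t+h) - e*h \<le> D t * (1 + h*L)"
          using hL unfolding D_def by (simp add: pos_divide_le_eq)
        then show "D (t+h) \<le> (1 + h*L) * D t + e*h" by (simp add: algebra_simps)
      qed
    qed
    fix t :: real assume t: "0 \<le> t"
    have "D t \<le> 0" by (rule gronwall_dini[OF contD D0 L0 step t]) auto
    then have "infdist (x t) P = 0" using infdist_nonneg[of "x t" P] unfolding D_def by linarith
    then show "x t \<in> P" using in_closed_iff_infdist_zero[OF Pclosed Pne] by blast
  qed
qed

end
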